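(* Let $\mathcal{H}$ be a finite family of digraphs, $D$ a digraph and $k$ an integer. A set $X\subseteq V(D)$ is a solution to the instance $(D,k)$ of $\mathcal{H}$-SCC Deletion if and only if it is a solution to the instance $(D,k)$ of the $GPC(\mathcal{H})$-Hitting problem.
   Context: Subgraphs are not necessarily induced; strong components are maximal sets of mutually reachable vertices. A solution to $(D,k)$ of $\mathcal{H}$-SCC Deletion is a set $X\subseteq V(D)$ with $|X|\le k$ such that no strong component of $D-X$ contains a subgraph isomorphic to a graph in $\mathcal{H}$. For a (possibly infinite) family $\mathcal{F}$, a solution to $(D,k)$ of $\mathcal{F}$-Hitting is a set $X\subseteq V(D)$ with $|X|\le k$ such that $D-X$ contains no subgraph isomorphic to a graph in $\mathcal{F}$. For a digraph $H$, $PC(H)$ is the set of strongly connected digraphs of the form $H\cup P_1\cup\dots\cup P_\ell$ (union of vertex and arc sets), where each $P_i$ is a directed path with both end-points in $V(H)$; $GPC(H)$ is the subset of those admitting such a representation with pairwise distinct ordered end-point pairs of the $P_i$. $GPC(\mathcal{H})=\bigcup_{H\in\mathcal{H}}GPC(H)$. *)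

theory Defs
  imports Main
begin

type_synonym 'a digraph = "'a set \<times> ('a \<times> 'a) set"

abbreviation verts :: "'a digraph \<Rightarrow> 'a set" where "verts G \<equiv> fst G"
abbreviation arcs :: "'a digraph \<Rightarrow> ('a \<times> 'a) set" where "arcs G \<equiv> snd G"

definition wf_digraph :: "'a digraph \<Rightarrow> bool" where
  "wf_digraph G \<longleftrightarrow> finite (verts G) \<and> arcs G \<subseteq> verts G \<times> verts G"

definition contains_subgraph :: "'a digraph \<Rightarrow> 'c digraph \<Rightarrow> bool" where
  "contains_subgraph G F \<longleftrightarrow>
     (\<exists>f. inj_on f (verts F) \<and> f ` verts F \<subseteq> verts G \<and>
          (\<forall>(u,v) \<in> arcs F. (f u, f v) \<in> arcs G))"

definition induced :: "'a digraph \<Rightarrow> 'a set \<Rightarrow> 'a digraph" where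
  "induced G S = (verts G \<inter> S, arcs G \<inter> (S \<times> S))"

definition del_verts :: "'a digraph \<Rightarrow> 'a set \<Rightarrow> 'a digraph" where
  "del_verts G X = induced G (verts G - X)"

definition strong_components :: "'a digraph \<Rightarrow> 'a set set" where
  "strong_components G =
     (\<lambda>u. {v \<in> verts G. (u, v) \<in> (arcs G)\<^sup>* \<and> (v, u) \<in> (arcs G)\<^sup>*}) ` verts G"

definition strongly_connected :: "'a digraph \<Rightarrow> bool" where
  "strongly_connected G \<longleftrightarrow> verts G \<noteq> {} \<and>
     (\<forall>u \<in> verts G. \<forall>v \<in> verts G. (u, v) \<in> (arcs G)\<^sup>*)"

definition is_dpath :: "'a list \<Rightarrow> bool" where
  "is_dpath p \<longleftrightarrow> p \<noteq> [] \<and> distinct p"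

definition path_digraph :: "'a list \<Rightarrow> 'a digraph" where
  "path_digraph p = (set p, {(p ! i, p ! Suc i) | i. Suc i < length p})"

definition PC :: "'c digraph \<Rightarrow> 'c digraph set" where
  "PC H = {G. strongly_connected G \<and>
     (\<exists>ps. (\<forall>p \<in> set ps. is_dpath p \<and> hd p \<in> verts H \<and> last p \<in> verts H) \<and>
           G = (verts H \<union> (\<Union>p \<in> set ps. verts (path_digraph p)),
                arcs H \<union> (\<Union>p \<in> set ps. arcs (path_digraph p))))}"

definition GPC :: "'c digraph \<Rightarrow> 'c digraph set" where
  "GPC H = {G. strongly_connected G \<and>
     (\<exists>ps. (\<forall>p \<in> set ps. is_dpath p \<and> hd p \<in> verts H \<and> last p \<in> verts H) \<and>
           distinct (map (\<lambda>p. (hd p, last p)) ps) \<and>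
           G = (verts H \<union> (\<Union>p \<in> set ps. verts (path_digraph p)),
                arcs H \<union> (\<Union>p \<in> set ps. arcs (path_digraph p))))}"

text \<open>To have room for fresh path vertices (members of GPC(H) are considered up to
  isomorphism), H :: 'b digraph is embedded into the vertex type 'b + nat via Inl.\<close>
definition lift :: "'b digraph \<Rightarrow> ('b + nat) digraph" where
  "lift H = (Inl ` verts H, map_prod Inl Inl ` arcs H)"

definition GPC_family :: "'b digraph set \<Rightarrow> ('b + nat) digraph set" where
  "GPC_family \<H> = (\<Union>H \<in> \<H>. GPC (lift H))"

definition SCC_deletion_solution ::
  "'b digraph set \<Rightarrow> 'a digraph \<Rightarrow> int \<Rightarrow> 'a set \<Rightarrow> bool" where
  "SCC_deletion_solution \<H> D k X \<longleftrightarrow> X \<subseteq> verts D \<and> int (card X) \<le> k \<and>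
     (\<forall>C \<in> strong_components (del_verts D X). \<forall>H \<in> \<H>.
        \<not> contains_subgraph (induced (del_verts D X) C) H)"

definition hitting_solution ::
  "'c digraph set \<Rightarrow> 'a digraph \<Rightarrow> int \<Rightarrow> 'a set \<Rightarrow> bool" where
  "hitting_solution \<F> D k X \<longleftrightarrow> X \<subseteq> verts D \<and> int (card X) \<le> k \<and>
     (\<forall>F \<in> \<F>. \<not> contains_subgraph (del_verts D X) F)"

end

theory Submission
  imports Defs
begin

fun walk :: "('a \<times> 'a) set \<Rightarrow> 'a list \<Rightarrow> bool" where
  "walk E [] = False"
| "walk E [x] = True"
| "walk E (x # y # xs) = ((x, y) \<in> E \<and> walk E (y # xs))"

lemma walk_index: "walk E p \<longleftrightarrow> p \<noteq> [] \<and> (\<forall>i. Suc i < length p \<longrightarrow> (p ! i, p ! Suc i) \<in> E)"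
proof (induction E p rule: walk.induct)
  case (3 E x y xs)
  show ?case
  proof
    assume "walk E (x # y # xs)"
    then show "x # y # xs \<noteq> [] \<and> (\<forall>i. Suc i < length (x # y # xs) \<longrightarrow> ((x # y # xs) ! i, (x # y # xs) ! Suc i) \<in> E)"
      using 3 by (auto simp: nth_Cons split: nat.splits)
  next
    assume a: "x # y # xs \<noteq> [] \<and> (\<forall>i. Suc i < length (x # y # xs) \<longrightarrow> ((x # y # xs) ! i, (x # y # xs) ! Suc i) \<in> E)"
    have "(x, y) \<in> E" using a[THEN conjunct2, rule_format, of 0] by simp
    moreover have "\<forall>i. Suc i < length (y # xs) \<longrightarrow> ((y # xs) ! i, (y # xs) ! Suc i) \<in> E"
      using a[THEN conjunct2] by (metis Suc_less_eq length_Cons nth_Cons_Suc)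
    ultimately show "walk E (x # y # xs)" using 3 by simp
  qed
qed auto

lemma walk_append: "walk E (xs @ y # ys) \<longleftrightarrow> walk E (xs @ [y]) \<and> walk E (y # ys)"
proof (induction xs)
  case (Cons a xs)
  then show ?case by (cases xs) auto
qed simp

lemma walk_last_Cons: "walk E (x # q) \<Longrightarrow> last (x # q) = (if q = [] then x else last q)"
  by simp

lemma rtrancl_distinct_walk:
  assumes "(x, y) \<in> E\<^sup>*"
  shows "\<exists>q. walk E q \<and> distinct q \<and> hd q = x \<and> last q = y"
  using assms
proof (induction rule: converse_rtrancl_induct)
  case base
  then show ?case by (intro exI[of _ "[y]"]) simp
next
  case (step x z)
  then obtain q where q: "walk E q" "distinct q" "hd q = z" "last q = y" by blast
  show ?case
  proof (cases "x \<in> set q")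
    case True
    then obtain a c where qa: "q = a @ x # c" by (meson split_list)
    have "walk E (x # c)" using q(1) qa walk_append by metis
    moreover have "distinct (x # c)" using q(2) qa by simp
    moreover have "last (x # c) = y" using q(4) qa by simp
    ultimately show ?thesis by (intro exI[of _ "x # c"]) simp
  next
    case False
    have "q \<noteq> []" using q(1) by auto
    then obtain w ws where "q = w # ws" by (cases q) auto
    then have "walk E (x # q)" using q step by simp
    moreover have "distinct (x # q)" using q False by simp
    moreover have "last (x # q) = y" using q \<open>q \<noteq> []\<close> by simp
    ultimately show ?thesis by (intro exI[of _ "x # q"]) simp
  qed
qed

lemma walk_set: "walk E q \<Longrightarrow> E \<subseteq> V \<times> V \<Longrightarrow> hd q \<in> V \<Longrightarrow> set q \<subseteq> V"
  by (induction E q rule: walk.induct) auto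

lemma walk_reach: "walk E q \<Longrightarrow> z \<in> set q \<Longrightarrow> (hd q, z) \<in> E\<^sup>* \<and> (z, last q) \<in> E\<^sup>*"
proof (induction E q arbitrary: z rule: walk.induct)
  case (3 E x y xs)
  then show ?case
    by (auto intro: converse_rtrancl_into_rtrancl)
qed auto

lemma walk_mono: "walk E q \<Longrightarrow> E \<subseteq> E' \<Longrightarrow> walk E' q"
  by (induction E q rule: walk.induct) auto

lemma walk_path_digraph: "p \<noteq> [] \<Longrightarrow> walk (arcs (path_digraph p)) p"
  unfolding walk_index path_digraph_def by auto

lemma rtrancl_map:
  assumes "(a, b) \<in> A\<^sup>*" "\<And>x y. (x, y) \<in> A \<Longrightarrow> (g x, g y) \<in> B"
  shows "(g a, g b) \<in> B\<^sup>*"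
  using assms(1)
  by (induction rule: rtrancl_induct) (auto intro: rtrancl_into_rtrancl assms(2))

lemma dir2:
  fixes H :: "'b digraph" and G :: "'a digraph"
  assumes wf: "wf_digraph H" and "verts H \<noteq> {}" and "F \<in> GPC (lift H)" and "contains_subgraph G F"
  shows "\<exists>C\<in>strong_components G. contains_subgraph (induced G C) H"
proof -
  from assms(3) obtain ps where sc: "strongly_connected F" and
    Feq: "F = (verts (lift H) \<union> (\<Union>p \<in> set ps. verts (path_digraph p)),
                arcs (lift H) \<union> (\<Union>p \<in> set ps. arcs (path_digraph p)))"
    unfolding GPC_def by blast
  from assms(4) obtain g where g: "inj_on g (verts F)" "g ` verts F \<subseteq> verts G"
    "\<forall>(u,v) \<in> arcs F. (g u, g v) \<in> arcs G"
    unfolding contains_subgraph_def by blast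
  have vFe: "verts F = verts (lift H) \<union> (\<Union>p \<in> set ps. verts (path_digraph p))"
    using Feq by simp
  have aFe: "arcs F = arcs (lift H) \<union> (\<Union>p \<in> set ps. arcs (path_digraph p))"
    using Feq by simp
  have vF: "Inl ` verts H \<subseteq> verts F" unfolding vFe by (simp add: lift_def)
  have aF: "(Inl u, Inl v) \<in> arcs F" if "(u, v) \<in> arcs H" for u v
    unfolding aFe using that by (auto simp add: lift_def intro!: disjI1 image_eqI[where x="(u,v)"])
  obtain h0 where h0: "h0 \<in> verts H" using assms(2) by blast
  define c where "c = g (Inl h0)"
  have reach: "(g a, g b) \<in> (arcs G)\<^sup>*" if "a \<in> verts F" "b \<in> verts F" for a b
  proof (rule rtrancl_map[of a b "arcs F"])
    show "(a, b) \<in> (arcs F)\<^sup>*" using sc that unfolding strongly_connected_def by blast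
    show "(g x, g y) \<in> arcs G" if "(x, y) \<in> arcs F" for x y using g(3) that by blast
  qed
  define C where "C = {v \<in> verts G. (c, v) \<in> (arcs G)\<^sup>* \<and> (v, c) \<in> (arcs G)\<^sup>*}"
  have cG: "c \<in> verts G" using c_def h0 vF g(2) by blast
  have "C \<in> strong_components G" unfolding strong_components_def C_def using cG by blast
  moreover have "contains_subgraph (induced G C) H"
    unfolding contains_subgraph_def induced_def
  proof (intro exI[of _ "g \<circ> Inl"] conjI)
    show "inj_on (g \<circ> Inl) (verts H)"
      using g(1) vF by (intro comp_inj_on) (auto intro: inj_on_subset)
    show "(g \<circ> Inl) ` verts H \<subseteq> verts (verts G \<inter> C, arcs G \<inter> C \<times> C)"
      proof clarify
      fix u assume u: "u \<in> verts H"
      then have uF: "Inl u \<in> verts F" using vF by auto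
      have h0F: "Inl h0 \<in> verts F" using h0 vF by auto
      have "g (Inl u) \<in> verts G" using uF g(2) by auto
      then show "(g \<circ> Inl) u \<in> verts (verts G \<inter> C, arcs G \<inter> C \<times> C)"
        using reach[OF h0F uF] reach[OF uF h0F] 
        unfolding C_def c_def by auto
    qed
    show "\<forall>(u, v)\<in>arcs H. ((g \<circ> Inl) u, (g \<circ> Inl) v) \<in> arcs (verts G \<inter> C, arcs G \<inter> C \<times> C)"
    proof (clarify)
      fix u v assume uv: "(u, v) \<in> arcs H"
      have "u \<in> verts H" "v \<in> verts H" using wf uv unfolding wf_digraph_def by auto
      then have inF: "Inl u \<in> verts F" "Inl v \<in> verts F" using vF by auto
      have h0F: "Inl h0 \<in> verts F" using h0 vF by auto
      have r1: "(c, g (Inl u)) \<in> (arcs G)\<^sup>*" "(g (Inl u), c) \<in> (arcs G)\<^sup>*"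
           "(c, g (Inl v)) \<in> (arcs G)\<^sup>*" "(g (Inl v), c) \<in> (arcs G)\<^sup>*"
        unfolding c_def using reach[OF h0F inF(1)] reach[OF inF(1) h0F] reach[OF h0F inF(2)] reach[OF inF(2) h0F] by auto
      have r2: "g (Inl u) \<in> verts G" "g (Inl v) \<in> verts G" using inF g(2) by auto
      have r3: "(g (Inl u), g (Inl v)) \<in> arcs G" using aF[OF uv] g(3) by auto
      show "((g \<circ> Inl) u, (g \<circ> Inl) v) \<in> arcs (verts G \<inter> C, arcs G \<inter> C \<times> C)"
        using r1 r2 r3 unfolding C_def by auto
    qed
  qed
  ultimately show ?thesis by blast
qed

lemma dir1:
  fixes H :: "'b digraph" and G :: "'a digraph"
  assumes wf: "wf_digraph H" and ne: "verts H \<noteq> {}"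
    and finG: "finite (verts G)" and wfG: "arcs G \<subseteq> verts G \<times> verts G"
    and C: "C \<in> strong_components G" and sub: "contains_subgraph (induced G C) H"
  shows "\<exists>F\<in>GPC (lift H). contains_subgraph G F"
proof -
  let ?E = "arcs G"
  from sub obtain f where f: "inj_on f (verts H)" "f ` verts H \<subseteq> verts G \<inter> C"
    "\<forall>(u,v) \<in> arcs H. (f u, f v) \<in> arcs G \<inter> C \<times> C"
    unfolding contains_subgraph_def induced_def by auto
  from C obtain u0 where Ceq: "C = {v \<in> verts G. (u0, v) \<in> ?E\<^sup>* \<and> (v, u0) \<in> ?E\<^sup>*}"
    unfolding strong_components_def by blast
  have R: "(f u, f v) \<in> ?E\<^sup>*" if "u \<in> verts H" "v \<in> verts H" for u v
  proof -
    have "(f u, u0) \<in> ?E\<^sup>*" "(u0, f v) \<in> ?E\<^sup>*" using f(2) that Ceq by auto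
    then show ?thesis by (rule rtrancl_trans)
  qed
  define Q where "Q u v = (SOME q. walk ?E q \<and> distinct q \<and> hd q = f u \<and> last q = f v)" for u v
  have Q: "walk ?E (Q u v) \<and> distinct (Q u v) \<and> hd (Q u v) = f u \<and> last (Q u v) = f v"
    if "u \<in> verts H" "v \<in> verts H" for u v
    unfolding Q_def by (rule someI_ex, rule rtrancl_distinct_walk, rule R[OF that])
  have QV: "set (Q u v) \<subseteq> verts G" if "u \<in> verts H" "v \<in> verts H" for u v
    using Q[OF that] walk_set[OF _ wfG] f(2) that by blast
  have finH: "finite (verts H)" using wf unfolding wf_digraph_def by simp
  obtain xs where xs: "set xs = verts H" "distinct xs" using finite_distinct_list[OF finH] by blast
  define pairs where "pairs = filter (\<lambda>(u,v). u \<noteq> v) (List.product xs xs)"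
  have setp: "set pairs = {(u,v). u \<in> verts H \<and> v \<in> verts H \<and> u \<noteq> v}"
    unfolding pairs_def using xs by auto
  have distp: "distinct pairs" unfolding pairs_def using xs by (simp add: distinct_product)
  define W where "W = f ` verts H \<union> (\<Union>(u,v)\<in>set pairs. set (Q u v))"
  have WG: "W \<subseteq> verts G" unfolding W_def setp using f(2) QV by blast
  have finW: "finite W" using WG finG finite_subset by blast
  obtain h :: "'a \<Rightarrow> nat" and n where h: "inj_on h W"
    using finite_imp_inj_to_nat_seg[OF finW] by blast
  define g where "g a = (if a \<in> f ` verts H then Inl (inv_into (verts H) f a) else Inr (h a))" for a
  have gf: "g (f u) = Inl u" if "u \<in> verts H" for u
    unfolding g_def using that f(1) by simp
  have ginj: "inj_on g W"
  proof (rule inj_onI)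
    fix a b assume ab: "a \<in> W" "b \<in> W" "g a = g b"
    show "a = b"
    proof (cases "a \<in> f ` verts H")
      case True
      then obtain u where u: "u \<in> verts H" "a = f u" by blast
      then have "g b = Inl u" using ab gf by simp
      then have "b \<in> f ` verts H" "inv_into (verts H) f b = u" unfolding g_def by (auto split: if_splits)
      then show ?thesis using u by (metis f_inv_into_f)
    next
      case False
      then have "g b = Inr (h a)" using ab unfolding g_def by simp
      then have "b \<notin> f ` verts H" "h b = h a" unfolding g_def by (auto split: if_splits)
      then show ?thesis using ab h by (metis inj_on_def)
    qed
  qed
  define ps where "ps = map (\<lambda>(u,v). map g (Q u v)) pairs"
  define F where "F = (verts (lift H) \<union> (\<Union>p \<in> set ps. verts (path_digraph p)),
                arcs (lift H) \<union> (\<Union>p \<in> set ps. arcs (path_digraph p)))"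
  have QW: "set (Q u v) \<subseteq> W" if "(u,v) \<in> set pairs" for u v
    unfolding W_def using that by blast
  have psD: "\<exists>u v. (u,v) \<in> set pairs \<and> p = map g (Q u v)" if "p \<in> set ps" for p
    using that unfolding ps_def by auto
  have Qne: "Q u v \<noteq> []" if "u \<in> verts H" "v \<in> verts H" for u v
    using Q[OF that] by (cases "Q u v") auto
  have hdp: "hd (map g (Q u v)) = Inl u" "last (map g (Q u v)) = Inl v"
    if "u \<in> verts H" "v \<in> verts H" for u v
    using Q[OF that] Qne[OF that] gf that by (simp_all add: hd_map last_map)
  have paths: "\<forall>p \<in> set ps. is_dpath p \<and> hd p \<in> verts (lift H) \<and> last p \<in> verts (lift H)"
  proof
    fix p assume "p \<in> set ps"
    then obtain u v where uv: "(u,v) \<in> set pairs" "p = map g (Q u v)" using psD by blast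
    have uvH: "u \<in> verts H" "v \<in> verts H" using uv(1) setp by auto
    have "distinct p" unfolding uv(2) using Q[OF uvH] QW[OF uv(1)] ginj
      by (simp add: distinct_map inj_on_subset)
    moreover have "p \<noteq> []" using uv(2) Qne[OF uvH] by simp
    ultimately show "is_dpath p \<and> hd p \<in> verts (lift H) \<and> last p \<in> verts (lift H)"
      unfolding is_dpath_def lift_def using hdp[OF uvH] uv(2) uvH by simp
  qed
  have distps: "distinct (map (\<lambda>p. (hd p, last p)) ps)"
  proof -
    have "map (\<lambda>p. (hd p, last p)) ps = map (\<lambda>(u,v). (Inl u, Inl v)) pairs"
      unfolding ps_def using setp hdp by (auto intro!: map_cong)
    moreover have "inj_on (\<lambda>(u,v). (Inl u :: 'b + nat, Inl v :: 'b + nat)) (set pairs)"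
      by (auto simp: inj_on_def)
    ultimately show ?thesis using distp by (simp add: distinct_map)
  qed
  have vFe: "verts F = Inl ` verts H \<union> (\<Union>p \<in> set ps. set p)"
    unfolding F_def lift_def path_digraph_def by simp
  have aFe: "arcs F = map_prod Inl Inl ` arcs H \<union> (\<Union>p \<in> set ps. arcs (path_digraph p))"
    unfolding F_def lift_def by simp
  have walkF: "walk (arcs F) p" if "p \<in> set ps" for p
  proof (rule walk_mono[OF walk_path_digraph])
    show "p \<noteq> []" using paths that unfolding is_dpath_def by blast
    show "arcs (path_digraph p) \<subseteq> arcs F" unfolding aFe using that by blast
  qed
  have HH: "(Inl u, Inl v) \<in> (arcs F)\<^sup>*" if "u \<in> verts H" "v \<in> verts H" for u v
  proof (cases "u = v")
    case False
    then have uvp: "(u,v) \<in> set pairs" using setp that by simp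
    let ?p = "map g (Q u v)"
    have pin: "?p \<in> set ps" unfolding ps_def using uvp by (auto intro!: image_eqI[where x="(u,v)"])
    have "?p \<noteq> []" using paths pin unfolding is_dpath_def by blast
    then have "hd ?p \<in> set ?p" by (rule hd_in_set)
    then have "(hd ?p, last ?p) \<in> (arcs F)\<^sup>*" using walk_reach[OF walkF[OF pin]]
      by blast
    then show ?thesis using hdp[OF that] by simp
  qed simp
  have toH: "(\<exists>u\<in>verts H. (x, Inl u) \<in> (arcs F)\<^sup>*) \<and> (\<exists>u\<in>verts H. (Inl u, x) \<in> (arcs F)\<^sup>*)"
    if "x \<in> verts F" for x
  proof (cases "x \<in> Inl ` verts H")
    case True
    then obtain u where "u \<in> verts H" "x = Inl u" by blast
    then show ?thesis by auto
  next
    case False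
    then have "x \<in> (\<Union>p \<in> set ps. set p)" using that unfolding vFe by simp
    then obtain p where p: "p \<in> set ps" "x \<in> set p" by blast
    have r: "(hd p, x) \<in> (arcs F)\<^sup>*" "(x, last p) \<in> (arcs F)\<^sup>*"
      using walk_reach[OF walkF[OF p(1)] p(2)] by auto
    have "hd p \<in> verts (lift H)" "last p \<in> verts (lift H)"
      using paths p(1) by blast+
    then obtain a b where "a \<in> verts H" "hd p = Inl a" "b \<in> verts H" "last p = Inl b"
      unfolding lift_def by auto
    then show ?thesis using r by metis
  qed
  have sc: "strongly_connected F"
    unfolding strongly_connected_def
  proof (intro conjI ballI)
    show "verts F \<noteq> {}" using ne unfolding vFe by simp
    fix x y assume xy: "x \<in> verts F" "y \<in> verts F"
    obtain u where u: "u \<in> verts H" "(x, Inl u) \<in> (arcs F)\<^sup>*" using toH[OF xy(1)] by blast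
    obtain v where v: "v \<in> verts H" "(Inl v, y) \<in> (arcs F)\<^sup>*" using toH[OF xy(2)] by blast
    show "(x, y) \<in> (arcs F)\<^sup>*" using u v HH[OF u(1) v(1)] by (meson rtrancl_trans)
  qed
  have "F \<in> GPC (lift H)" unfolding GPC_def using sc paths distps F_def by blast
  moreover have "contains_subgraph G F"
    unfolding contains_subgraph_def
  proof (intro exI[of _ "inv_into W g"] conjI)
    have fW: "f u \<in> W" if "u \<in> verts H" for u unfolding W_def using that by blast
    have inv1: "inv_into W g (Inl u) = f u" if "u \<in> verts H" for u
      using inv_into_f_f[OF ginj fW[OF that]] gf[OF that] by simp
    have vsub: "verts F \<subseteq> g ` W"
    proof
      fix x assume "x \<in> verts F"
      then consider (a) "x \<in> Inl ` verts H" | (b) p where "p \<in> set ps" "x \<in> set p"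
        unfolding vFe by blast
      then show "x \<in> g ` W"
      proof cases
        case a
        then obtain u where "u \<in> verts H" "x = Inl u" by blast
        then show ?thesis using gf fW by (metis image_eqI)
      next
        case (b p)
        then obtain u v where uv: "(u,v) \<in> set pairs" "p = map g (Q u v)" using psD by blast
        then show ?thesis using b(2) QW[OF uv(1)] by auto
      qed
    qed
    show "inj_on (inv_into W g) (verts F)" using vsub by (rule inj_on_inv_into)
    show "inv_into W g ` verts F \<subseteq> verts G" using vsub WG by (auto intro: inv_into_into)
    show "\<forall>(u, v)\<in>arcs F. (inv_into W g u, inv_into W g v) \<in> arcs G"
    proof clarify
      fix x y assume "(x, y) \<in> arcs F"
      then consider (a) "(x, y) \<in> map_prod Inl Inl ` arcs H" | (b) p where "p \<in> set ps" "(x, y) \<in> arcs (path_digraph p)"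
        unfolding aFe by blast
      then show "(inv_into W g x, inv_into W g y) \<in> arcs G"
      proof cases
        case a
        then obtain u v where uv: "(u, v) \<in> arcs H" "x = Inl u" "y = Inl v" by auto
        have "u \<in> verts H" "v \<in> verts H" using wf uv unfolding wf_digraph_def by auto
        then have "inv_into W g x = f u" "inv_into W g y = f v" using inv1 uv by simp_all
        moreover have "(f u, f v) \<in> arcs G" using f(3) uv(1) by blast
        ultimately show ?thesis by simp
      next
        case (b p)
        then obtain u v where uv: "(u,v) \<in> set pairs" "p = map g (Q u v)" using psD by blast
        have uvH: "u \<in> verts H" "v \<in> verts H" using uv(1) setp by auto
        have "(x, y) \<in> {(p ! i, p ! Suc i) | i. Suc i < length p}"
          using b(2) unfolding path_digraph_def by simp
        then obtain i where i: "Suc i < length p" "x = p ! i" "y = p ! Suc i"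
          by blast
        have l: "Suc i < length (Q u v)" using i uv by simp
        have xi: "x = g (Q u v ! i)" "y = g (Q u v ! Suc i)"
          using l by (simp_all add: i(2,3) uv(2) Suc_lessD)
        have "Q u v ! i \<in> set (Q u v)" "Q u v ! Suc i \<in> set (Q u v)" using l by simp_all
        then have inW: "Q u v ! i \<in> W" "Q u v ! Suc i \<in> W" using QW[OF uv(1)] by blast+
        have "walk (arcs G) (Q u v)" using Q[OF uvH] by blast
        then have "\<forall>j. Suc j < length (Q u v) \<longrightarrow> (Q u v ! j, Q u v ! Suc j) \<in> arcs G"
          unfolding walk_index by blast
        then have "(Q u v ! i, Q u v ! Suc i) \<in> arcs G" using l by blast
        then show ?thesis using xi inv_into_f_f[OF ginj inW(1)] inv_into_f_f[OF ginj inW(2)] by simp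
      qed
    qed
  qed
  ultimately show ?thesis by blast
qed

theorem lemma20:
  fixes \<H> :: "'b digraph set" and D :: "'a digraph" and k :: int and X :: "'a set"
  assumes "finite \<H>"
    and "\<forall>H \<in> \<H>. wf_digraph H \<and> verts H \<noteq> {}"
    and "wf_digraph D"
  shows "SCC_deletion_solution \<H> D k X \<longleftrightarrow> hitting_solution (GPC_family \<H>) D k X"
proof -
  let ?G = "del_verts D X"
  have vG: "verts ?G = verts D - X" unfolding del_verts_def induced_def by auto
  have finG: "finite (verts ?G)" using assms(3) vG unfolding wf_digraph_def by simp
  have wfG: "arcs ?G \<subseteq> verts ?G \<times> verts ?G"
    using vG unfolding del_verts_def induced_def by auto
  have "(\<forall>C \<in> strong_components ?G. \<forall>H \<in> \<H>. \<not> contains_subgraph (induced ?G C) H)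
     \<longleftrightarrow> (\<forall>F \<in> GPC_family \<H>. \<not> contains_subgraph ?G F)"
  proof
    assume L: "\<forall>C \<in> strong_components ?G. \<forall>H \<in> \<H>. \<not> contains_subgraph (induced ?G C) H"
    show "\<forall>F \<in> GPC_family \<H>. \<not> contains_subgraph ?G F"
    proof (intro ballI notI)
      fix F assume F: "F \<in> GPC_family \<H>" and cs: "contains_subgraph ?G F"
      then obtain H where H: "H \<in> \<H>" "F \<in> GPC (lift H)" unfolding GPC_family_def by blast
      have "wf_digraph H" "verts H \<noteq> {}" using assms(2) H(1) by auto
      from dir2[OF this H(2) cs] L H(1) show False by blast
    qed
  next
    assume R: "\<forall>F \<in> GPC_family \<H>. \<not> contains_subgraph ?G F"
    show "\<forall>C \<in> strong_components ?G. \<forall>H \<in> \<H>. \<not> contains_subgraph (induced ?G C) H"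
    proof (intro ballI notI)
      fix C H assume C: "C \<in> strong_components ?G" and H: "H \<in> \<H>"
        and cs: "contains_subgraph (induced ?G C) H"
      have "wf_digraph H" "verts H \<noteq> {}" using assms(2) H by auto
      from dir1[OF this finG wfG C cs] obtain F where "F \<in> GPC (lift H)" "contains_subgraph ?G F"
        by blast
      then show False using R H unfolding GPC_family_def by blast
    qed
  qed
  then show ?thesis unfolding SCC_deletion_solution_def hitting_solution_def by blast
qed

end
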